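(* Let $N\ge 1$ and $d\ge 1$ be integers, and let $\{|0\rangle,\dots,|d-1\rangle\}$ be an orthonormal basis of $\mathcal{H}_d=\mathbb{C}^d$. Let $(a_{k,j})_{0\le k\le d-1,\,0\le j\le N}$ be a $d\times(N+1)$ complex matrix such that $a_{0,j}=1$ for all $j$, and for every $1\le k\le d-1$ and all $0\le j\ne j'\le N$ one has $a_{k,j}\neq a_{k,j'}$. Then the set $$\mathcal{B}=\Big\{|\Phi_{\vec j}\rangle=\big(a_{0,j_0}|0\rangle+a_{1,j_1}|1\rangle+\cdots+a_{d-1,j_{d-1}}|d-1\rangle\big)^{\otimes N}\ \Big|\ \vec j=(j_0,\dots,j_{d-1})\in\mathbb{Z}_{\ge0}^d,\ \textstyle\sum_{k=0}^{d-1}j_k=N\Big\}$$ consists of $\binom{N+d-1}{N}$ linearly independent vectors (one for each admissible $\vec j$), and it spans the symmetric subspace $\mathrm{Sym}_N(\mathcal{H}_d)$.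
   Context: For a permutation $\pi\in S_N$, the permutation operator on $\mathcal{H}_d^{\otimes N}$ is $P_d(\pi)=\sum_{i_1,\dots,i_N\in\{0,\dots,d-1\}}|i_{\pi^{-1}(1)},\dots,i_{\pi^{-1}(N)}\rangle\langle i_1,\dots,i_N|$. The symmetric subspace is $\mathrm{Sym}_N(\mathcal{H}_d)=\{|\Psi\rangle\in\mathcal{H}_d^{\otimes N}: P_d(\pi)|\Psi\rangle=|\Psi\rangle\ \forall\pi\in S_N\}$; its dimension is $\binom{N+d-1}{N}$. *)

theory Defs
  imports "HOL-Analysis.Analysis" "HOL-Combinatorics.Permutations" "HOL-Library.Function_Algebras"
begin

text \<open>Vectors of the tensor power H_d^{(x)N} are modelled as coefficient functions
  on computational basis labels (i_1,...,i_N), i.e. lists of length N with entries < d;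
  they vanish outside this index set.\<close>

definition basis_idx :: "nat \<Rightarrow> nat \<Rightarrow> nat list set" where
  "basis_idx N d = {is. length is = N \<and> set is \<subseteq> {..<d}}"

definition tensor_space :: "nat \<Rightarrow> nat \<Rightarrow> (nat list \<Rightarrow> complex) set" where
  "tensor_space N d = {\<Psi>. \<forall>is. is \<notin> basis_idx N d \<longrightarrow> \<Psi> is = 0}"

definition cscale :: "complex \<Rightarrow> (nat list \<Rightarrow> complex) \<Rightarrow> (nat list \<Rightarrow> complex)" where
  "cscale c f = (\<lambda>x. c * f x)"

definition tensor_pow :: "nat \<Rightarrow> nat \<Rightarrow> (nat \<Rightarrow> complex) \<Rightarrow> (nat list \<Rightarrow> complex)" where
  "tensor_pow N d v = (\<lambda>is. if is \<in> basis_idx N d then prod_list (map v is) else 0)"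

text \<open>P(pi) sends |i_0..i_{N-1}> to |i_{pi^-1(0)} .. i_{pi^-1(N-1)}>, so
  the coefficient of |k_0..k_{N-1}> in P(pi)Psi is the coefficient of
  |k_{pi(0)} .. k_{pi(N-1)}> in Psi.\<close>
definition perm_op :: "nat \<Rightarrow> nat \<Rightarrow> (nat \<Rightarrow> nat) \<Rightarrow> (nat list \<Rightarrow> complex) \<Rightarrow> (nat list \<Rightarrow> complex)" where
  "perm_op N d \<pi> \<Psi> = (\<lambda>ks. if ks \<in> basis_idx N d then \<Psi> (map (\<lambda>l. ks ! \<pi> l) [0..<N]) else 0)"

definition sym_subspace :: "nat \<Rightarrow> nat \<Rightarrow> (nat list \<Rightarrow> complex) set" where
  "sym_subspace N d = {\<Psi> \<in> tensor_space N d. \<forall>\<pi>. \<pi> permutes {..<N} \<longrightarrow> perm_op N d \<pi> \<Psi> = \<Psi>}"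

definition adm_idx :: "nat \<Rightarrow> nat \<Rightarrow> nat list set" where
  "adm_idx N d = {js. length js = d \<and> sum_list js = N}"

definition Phi :: "nat \<Rightarrow> nat \<Rightarrow> (nat \<Rightarrow> nat \<Rightarrow> complex) \<Rightarrow> nat list \<Rightarrow> (nat list \<Rightarrow> complex)" where
  "Phi N d a js = tensor_pow N d (\<lambda>k. a k (js ! k))"

end

theory Submission imports Defs begin

lemma vs: "vector_space cscale"
  by unfold_locales (auto simp: cscale_def fun_eq_iff algebra_simps)

interpretation V: vector_space cscale by (rule vs)

lemma cscale_apply[simp]: "cscale c f x = c * f x" by (simp add: cscale_def)

lemma sum_fun_apply: "(\<Sum>j\<in>S. f j) x = (\<Sum>j\<in>S. f j x)"
  by (induction S rule: infinite_finite_induct) auto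

fun pw :: "(nat \<Rightarrow> complex) list \<Rightarrow> nat list \<Rightarrow> complex" where
  "pw (g#gs) (i#is) = g i * pw gs is"
| "pw _ _ = 1"

lemma basis_idx_Suc: "basis_idx (Suc n) d = (\<lambda>(i,is). i#is) ` ({..<d} \<times> basis_idx n d)"
  by (auto simp: basis_idx_def length_Suc_conv image_iff)

lemma finite_basis_idx: "finite (basis_idx n d)"
proof -
  have "basis_idx n d = {xs. set xs \<subseteq> {..<d} \<and> length xs = n}" by (auto simp: basis_idx_def)
  thus ?thesis using finite_lists_length_eq[of "{..<d}" n] by simp
qed

lemma sum_pw: "(\<Sum>is\<in>basis_idx (length gs) d. pw gs is) = prod_list (map (\<lambda>g. \<Sum>i<d. g i) gs)"
proof (induction gs)
  case Nil
  have "basis_idx 0 d = {[]}" by (auto simp: basis_idx_def)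
  thus ?case by simp
next
  case (Cons g gs)
  have inj: "inj_on (\<lambda>(i,is). i#is) ({..<d} \<times> basis_idx (length gs) d)"
    by (auto simp: inj_on_def)
  have "(\<Sum>is\<in>basis_idx (length (g#gs)) d. pw (g#gs) is)
      = (\<Sum>(i,is)\<in>{..<d} \<times> basis_idx (length gs) d. g i * pw gs is)"
    by (simp only: basis_idx_Suc length_Cons, subst sum.reindex[OF inj]) (simp add: case_prod_beta)
  also have "\<dots> = (\<Sum>i<d. \<Sum>is\<in>basis_idx (length gs) d. g i * pw gs is)"
    by (rule sum.cartesian_product[symmetric])
  also have "\<dots> = (\<Sum>i<d. g i) * (\<Sum>is\<in>basis_idx (length gs) d. pw gs is)"
    by (rule sum_product[symmetric])
  finally show ?case using Cons by simp
qed

lemma pw_mult: "length gs = length xs \<Longrightarrow>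
  pw gs xs * prod_list (map v xs) = pw (map (\<lambda>g i. g i * v i) gs) xs"
  by (induction gs xs rule: pw.induct) auto

lemma length_pw_basis: "xs \<in> basis_idx n d \<Longrightarrow> length xs = n" by (simp add: basis_idx_def)

lemma adm_sub: "adm_idx N d \<subseteq> {xs. set xs \<subseteq> {..N} \<and> length xs = d}"
  by (auto simp: adm_idx_def member_le_sum_list)

lemma finite_adm: "finite (adm_idx N d)"
  using finite_lists_length_eq[of "{..N}" d] adm_sub finite_subset by blast

lemma adm_nth_le: "j \<in> adm_idx N d \<Longrightarrow> k < d \<Longrightarrow> j ! k \<le> N"
  using elem_le_sum_list[of k j] by (auto simp: adm_idx_def)

definition gf :: "(nat \<Rightarrow> nat \<Rightarrow> complex) \<Rightarrow> nat \<Rightarrow> nat \<Rightarrow> nat \<Rightarrow> complex" where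
  "gf a k t = (\<lambda>i. (if i = k then 1 else 0) - (if i = 0 then a k t else 0))"

definition e0 :: "nat \<Rightarrow> complex" where "e0 = (\<lambda>i. if i = 0 then 1 else 0)"

definition sj :: "nat \<Rightarrow> nat list \<Rightarrow> nat" where "sj d j = (\<Sum>k\<in>{1..<d}. j ! k)"

definition gsj :: "nat \<Rightarrow> nat \<Rightarrow> (nat \<Rightarrow> nat \<Rightarrow> complex) \<Rightarrow> nat list \<Rightarrow> (nat \<Rightarrow> complex) list" where
  "gsj N d a j = concat (map (\<lambda>k. map (gf a k) [0..<j!k]) [1..<d]) @ replicate (N - sj d j) e0"

lemma sum_list_adm: "j \<in> adm_idx N d \<Longrightarrow> d \<ge> 1 \<Longrightarrow> j ! 0 + sj d j = N"
proof -
  assume j: "j \<in> adm_idx N d" and d: "d \<ge> 1"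
  have "N = (\<Sum>k = 0..<d. j ! k)" using j by (auto simp: adm_idx_def sum_list_sum_nth)
  also have "\<dots> = j ! 0 + sj d j" using d by (simp add: sj_def sum.atLeast_Suc_lessThan)
  finally show ?thesis by simp
qed

lemma length_gsj: "j \<in> adm_idx N d \<Longrightarrow> d \<ge> 1 \<Longrightarrow> length (gsj N d a j) = N"
proof -
  assume j: "j \<in> adm_idx N d" and d: "d \<ge> 1"
  have "length (concat (map (\<lambda>k. map (gf a k) [0..<j!k]) [1..<d])) = sj d j"
    by (simp add: length_concat sj_def comp_def sum_set_upt_conv_sum_list_nat[symmetric])
  thus ?thesis using sum_list_adm[OF j d] by (simp add: gsj_def)
qed

lemma F_Phi:
  assumes j: "j \<in> adm_idx N d" and d: "d \<ge> 1"
  shows "(\<Sum>xs\<in>basis_idx N d. pw (gsj N d a j) xs * Phi N d a j' xs)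
     = prod_list (map (\<lambda>g. \<Sum>i<d. g i * a i (j' ! i)) (gsj N d a j))"
proof -
  let ?gs = "gsj N d a j" and ?v = "\<lambda>k. a k (j' ! k)"
  have "(\<Sum>xs\<in>basis_idx N d. pw ?gs xs * Phi N d a j' xs)
      = (\<Sum>xs\<in>basis_idx (length (map (\<lambda>g i. g i * ?v i) ?gs)) d. pw (map (\<lambda>g i. g i * ?v i) ?gs) xs)"
    using length_gsj[OF j d] 
    by (intro sum.cong) (auto simp: Phi_def tensor_pow_def pw_mult basis_idx_def)
  also have "\<dots> = prod_list (map (\<lambda>g. \<Sum>i<d. g i * ?v i) ?gs)"
    by (rule trans[OF sum_pw]) (simp add: comp_def)
  finally show ?thesis .
qed

lemma phi_gf: "1 \<le> k \<Longrightarrow> k < d \<Longrightarrow> (\<Sum>i<d. gf a k t i * v i) = v k - a k t * v 0"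
proof -
  assume k: "1 \<le> k" "k < d"
  have "(\<Sum>i<d. gf a k t i * v i) = (\<Sum>i<d. (if i = k then v i else 0) - (if i = 0 then a k t * v i else 0))"
    by (intro sum.cong) (auto simp: gf_def algebra_simps)
  also have "\<dots> = v k - a k t * v 0" using k by (simp add: sum_subtractf sum.delta)
  finally show ?thesis .
qed

lemma phi_e0: "0 < d \<Longrightarrow> (\<Sum>i<d. e0 i * v i) = v 0"
proof -
  assume "0 < d"
  have "(\<Sum>i<d. e0 i * v i) = (\<Sum>i<d. if i = 0 then v i else 0)"
    by (intro sum.cong) (auto simp: e0_def)
  thus ?thesis using \<open>0 < d\<close> by (simp add: sum.delta)
qed

lemma indep_core:
  fixes N d :: nat and a :: "nat \<Rightarrow> nat \<Rightarrow> complex"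
  assumes d: "d \<ge> 1"
    and a0: "\<And>j. j \<le> N \<Longrightarrow> a 0 j = 1"
    and ad: "\<And>k j j'. 1 \<le> k \<Longrightarrow> k \<le> d - 1 \<Longrightarrow> j \<le> N \<Longrightarrow> j' \<le> N \<Longrightarrow> j \<noteq> j' \<Longrightarrow> a k j \<noteq> a k j'"
    and S: "S \<subseteq> adm_idx N d"
    and z: "(\<Sum>j\<in>S. cscale (c j) (Phi N d a j)) = 0"
  shows "\<forall>j\<in>S. c j = 0"
proof (rule ccontr)
  assume "\<not> (\<forall>j\<in>S. c j = 0)"
  define T where "T = {j\<in>S. c j \<noteq> 0}"
  have fS: "finite S" using S finite_adm finite_subset by blast
  have fT: "finite T" "T \<noteq> {}" using fS \<open>\<not> _\<close> by (auto simp: T_def)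
  define m where "m = Max (sj d ` T)"
  have "m \<in> sj d ` T" unfolding m_def using fT by (intro Max_in) auto
  then obtain j where jT: "j \<in> T" and jm: "sj d j = m" by auto
  have jmax: "sj d j' \<le> sj d j" if "j' \<in> T" for j'
    unfolding jm m_def using fT that by (intro Max_ge) auto
  have jS: "j \<in> S" and cj: "c j \<noteq> 0" using jT by (auto simp: T_def)
  have jA: "j \<in> adm_idx N d" using jS S by auto
  have d0: "0 < d" using d by simp
  let ?gs = "gsj N d a j"
  define P where "P j' = prod_list (map (\<lambda>g. \<Sum>i<d. g i * a i (j' ! i)) ?gs)" for j'
  have zz: "\<And>xs. (\<Sum>j'\<in>S. c j' * Phi N d a j' xs) = 0"
  proof -
    fix xs
    have "(\<Sum>j'\<in>S. cscale (c j') (Phi N d a j')) xs = 0" using z by simp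
    thus "(\<Sum>j'\<in>S. c j' * Phi N d a j' xs) = 0" by (simp add: sum_fun_apply)
  qed
  have "0 = (\<Sum>xs\<in>basis_idx N d. pw ?gs xs * (\<Sum>j'\<in>S. c j' * Phi N d a j' xs))"
    by (simp add: zz)
  also have "\<dots> = (\<Sum>j'\<in>S. c j' * (\<Sum>xs\<in>basis_idx N d. pw ?gs xs * Phi N d a j' xs))"
    by (subst sum_distrib_left, subst sum.swap, simp add: sum_distrib_left mult_ac)
  also have "\<dots> = (\<Sum>j'\<in>S. c j' * P j')"
    by (simp add: F_Phi[OF jA d] P_def)
  also have "\<dots> = c j * P j"
  proof (rule sum.remove[OF fS jS, THEN trans], rule trans[OF _ add_0_right], rule arg_cong[where f="\<lambda>x. _ + x"], rule sum.neutral, rule ballI)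
    fix j' assume j': "j' \<in> S - {j}"
    show "c j' * P j' = 0"
    proof (cases "c j' = 0")
      case False
      hence "j' \<in> T" using j' by (auto simp: T_def)
      hence le: "sj d j' \<le> sj d j" by (rule jmax)
      have j'A: "j' \<in> adm_idx N d" using j' S by auto
      have "\<exists>k\<in>{1..<d}. j' ! k < j ! k"
      proof (rule ccontr)
        assume "\<not> ?thesis"
        hence ge: "\<forall>k\<in>{1..<d}. j ! k \<le> j' ! k" by auto
        have eqk: "\<forall>k\<in>{1..<d}. j ! k = j' ! k"
        proof (rule ccontr)
          assume "\<not> ?thesis"
          then obtain k where "k\<in>{1..<d}" "j ! k < j' ! k" using ge by force
          hence "sj d j < sj d j'" unfolding sj_def using ge
            by (intro sum_strict_mono_ex1) auto
          thus False using le by simp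
        qed
        hence "sj d j = sj d j'" by (simp add: sj_def)
        hence "j ! 0 = j' ! 0" using sum_list_adm[OF jA d] sum_list_adm[OF j'A d] by simp
        hence "\<forall>k<d. j ! k = j' ! k" using eqk
          by (intro allI impI, case_tac "k = 0") auto
        hence "j = j'" using jA j'A by (intro nth_equalityI) (auto simp: adm_idx_def)
        thus False using j' by simp
      qed
      then obtain k where k: "1 \<le> k" "k < d" "j' ! k < j ! k" by auto
      have "gf a k (j' ! k) \<in> set ?gs" using k by (force simp: gsj_def)
      moreover have "(\<Sum>i<d. gf a k (j' ! k) i * a i (j' ! i)) = 0"
        using k by (simp add: phi_gf a0[OF adm_nth_le[OF j'A d0]])
      ultimately have "P j' = 0" unfolding P_def prod_list_zero_iff by force
      thus ?thesis by simp
    qed simp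
  qed
  finally have "c j * P j = 0" by simp
  moreover have "P j \<noteq> 0"
    unfolding P_def prod_list_zero_iff
  proof
    assume "0 \<in> set (map (\<lambda>g. \<Sum>i<d. g i * a i (j ! i)) ?gs)"
    then obtain g where g: "g \<in> set ?gs" "(\<Sum>i<d. g i * a i (j ! i)) = 0" by auto
    have j0: "a 0 (j ! 0) = 1" using a0[OF adm_nth_le[OF jA]] d by simp
    show False
    proof (cases "g = e0")
      case True thus False using g j0 d phi_e0[of d] by simp
    next
      case False
      then obtain k t where kt: "1 \<le> k" "k < d" "t < j ! k" "g = gf a k t"
        using g(1) unfolding gsj_def by (auto split: if_splits)
      have "a k (j ! k) \<noteq> a k t"
        using ad[of k "j ! k" t] kt adm_nth_le[OF jA, of k] by simp
      thus False using g kt phi_gf[of k d a t] j0 by simp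
    qed
  qed
  ultimately show False using cj by simp
qed

lemma subspace_sym: "V.subspace (sym_subspace N d)"
  unfolding V.subspace_def sym_subspace_def tensor_space_def
  by (auto simp: perm_op_def fun_eq_iff)

lemma prod_list_mset: "prod_list (map v xs) = prod_mset (image_mset v (mset xs))"
  by (metis mset_map prod_mset_prod_list)

lemma permute_list_basis: "\<pi> permutes {..<N} \<Longrightarrow> ks \<in> basis_idx N d \<Longrightarrow>
   map (\<lambda>l. ks ! \<pi> l) [0..<N] = permute_list \<pi> ks"
  by (simp add: permute_list_def basis_idx_def)

lemma tensor_pow_sym: "tensor_pow N d v \<in> sym_subspace N d"
  unfolding sym_subspace_def tensor_space_def
proof (safe)
  fix \<pi> assume p: "\<pi> permutes {..<N}"
  show "perm_op N d \<pi> (tensor_pow N d v) = tensor_pow N d v"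
  proof
    fix ks
    show "perm_op N d \<pi> (tensor_pow N d v) ks = tensor_pow N d v ks"
    proof (cases "ks \<in> basis_idx N d")
      case True
      hence L: "length ks = N" by (simp add: basis_idx_def)
      have p': "\<pi> permutes {..<length ks}" using p L by simp
      have "permute_list \<pi> ks \<in> basis_idx N d" using True p' by (simp add: basis_idx_def)
      thus ?thesis using True p' permute_list_basis[OF p True]
        by (simp add: perm_op_def tensor_pow_def prod_list_mset)
    qed (simp add: perm_op_def tensor_pow_def)
  qed
qed (simp add: tensor_pow_def)

lemma Phi_sym: "Phi N d a j \<in> sym_subspace N d"
  by (simp add: Phi_def tensor_pow_sym)

definition cnt :: "nat \<Rightarrow> nat list \<Rightarrow> nat list" where
  "cnt d xs = map (count_list xs) [0..<d]"

lemma sum_cnt: "set xs \<subseteq> {..<d} \<Longrightarrow> sum_list (cnt d xs) = length xs"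
proof (induction xs)
  case Nil thus ?case by (simp add: cnt_def sum_list_triv)
next
  case (Cons x xs)
  have "sum_list (cnt d (x#xs)) = (\<Sum>k\<in>{0..<d}. (if x = k then 1 else 0) + count_list xs k)"
    by (simp add: cnt_def sum_set_upt_conv_sum_list_nat[symmetric]) (intro sum.cong, auto)
  also have "\<dots> = 1 + (\<Sum>k\<in>{0..<d}. count_list xs k)"
    using Cons.prems by (simp add: sum.distrib)
  also have "(\<Sum>k\<in>{0..<d}. count_list xs k) = length xs"
    using Cons by (simp add: cnt_def sum_set_upt_conv_sum_list_nat[symmetric])
  finally show ?case by simp
qed

lemma cnt_adm: "xs \<in> basis_idx N d \<Longrightarrow> cnt d xs \<in> adm_idx N d"
  by (simp add: adm_idx_def basis_idx_def sum_cnt) (simp add: cnt_def)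

lemma cnt_mset: "xs \<in> basis_idx N d \<Longrightarrow> ys \<in> basis_idx N d \<Longrightarrow> cnt d xs = cnt d ys \<Longrightarrow> mset xs = mset ys"
proof -
  assume x: "xs \<in> basis_idx N d" and y: "ys \<in> basis_idx N d" and c: "cnt d xs = cnt d ys"
  show ?thesis
  proof (rule multiset_eqI)
    fix k
    show "count (mset xs) k = count (mset ys) k"
    proof (cases "k < d")
      case True
      have "cnt d xs ! k = cnt d ys ! k" using c by simp
      thus ?thesis using True by (simp add: cnt_def count_mset)
    next
      case False
      hence "k \<notin> set xs" "k \<notin> set ys" using x y by (auto simp: basis_idx_def)
      thus ?thesis by (simp add: count_mset count_list_0_iff)
    qed
  qed
qed

definition Ec :: "nat \<Rightarrow> nat \<Rightarrow> nat list \<Rightarrow> nat list \<Rightarrow> complex" where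
  "Ec N d c = (\<lambda>xs. if xs \<in> basis_idx N d \<and> cnt d xs = c then 1 else 0)"

lemma sym_perm_eq:
  assumes P: "\<Psi> \<in> sym_subspace N d" and x: "xs \<in> basis_idx N d" and y: "ys \<in> basis_idx N d"
    and c: "cnt d xs = cnt d ys"
  shows "\<Psi> xs = \<Psi> ys"
proof -
  have m: "mset xs = mset ys" by (rule cnt_mset[OF x y c])
  obtain p where p: "p permutes {..<length ys}" "permute_list p ys = xs"
    using mset_eq_permutation[OF m] by blast
  have L: "length ys = N" using y by (simp add: basis_idx_def)
  have "perm_op N d p \<Psi> ys = \<Psi> ys" using P p L by (simp add: sym_subspace_def)
  thus ?thesis using y p L permute_list_basis[of p N ys d] by (simp add: perm_op_def)
qed

lemma sym_in_span: "sym_subspace N d \<subseteq> V.span (Ec N d ` adm_idx N d)"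
proof
  fix \<Psi> assume P: "\<Psi> \<in> sym_subspace N d"
  define r where "r c = (SOME xs. xs \<in> basis_idx N d \<and> cnt d xs = c)" for c
  have eq: "\<Psi> = (\<Sum>c\<in>adm_idx N d. cscale (\<Psi> (r c)) (Ec N d c))"
  proof
    fix xs
    show "\<Psi> xs = (\<Sum>c\<in>adm_idx N d. cscale (\<Psi> (r c)) (Ec N d c)) xs"
    proof (cases "xs \<in> basis_idx N d")
      case False
      hence "\<Psi> xs = 0" using P by (simp add: sym_subspace_def tensor_space_def)
      thus ?thesis using False by (simp add: sum_fun_apply Ec_def)
    next
      case True
      have ca: "cnt d xs \<in> adm_idx N d" by (rule cnt_adm[OF True])
      have "\<exists>ys. ys \<in> basis_idx N d \<and> cnt d ys = cnt d xs" using True by blast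
      hence rr: "r (cnt d xs) \<in> basis_idx N d \<and> cnt d (r (cnt d xs)) = cnt d xs"
        unfolding r_def by (rule someI_ex)
      have "(\<Sum>c\<in>adm_idx N d. cscale (\<Psi> (r c)) (Ec N d c)) xs
          = (\<Sum>c\<in>adm_idx N d. if c = cnt d xs then \<Psi> (r c) else 0)"
        using True by (simp add: sum_fun_apply Ec_def) (intro sum.cong, auto)
      also have "\<dots> = \<Psi> (r (cnt d xs))" using ca finite_adm by (simp add: sum.delta')
      also have "\<dots> = \<Psi> xs" using sym_perm_eq[OF P _ True] rr by simp
      finally show ?thesis by simp
    qed
  qed
  show "\<Psi> \<in> V.span (Ec N d ` adm_idx N d)"
    by (subst eq, intro V.span_sum V.span_scale V.span_base) auto
qed

theorem theorem1:
  fixes N d :: nat and a :: "nat \<Rightarrow> nat \<Rightarrow> complex"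
  assumes "N \<ge> 1" and "d \<ge> 1"
    and "\<And>j. j \<le> N \<Longrightarrow> a 0 j = 1"
    and "\<And>k j j'. 1 \<le> k \<Longrightarrow> k \<le> d - 1 \<Longrightarrow> j \<le> N \<Longrightarrow> j' \<le> N \<Longrightarrow> j \<noteq> j' \<Longrightarrow> a k j \<noteq> a k j'"
  shows "inj_on (Phi N d a) (adm_idx N d)
    \<and> card (Phi N d a ` adm_idx N d) = (N + d - 1) choose N
    \<and> \<not> module.dependent cscale (Phi N d a ` adm_idx N d)
    \<and> module.span cscale (Phi N d a ` adm_idx N d) = sym_subspace N d"
proof -
  let ?A = "adm_idx N d" and ?B = "Phi N d a ` adm_idx N d"
  have core: "\<forall>j\<in>S. c j = 0" if "S \<subseteq> ?A" "(\<Sum>j\<in>S. cscale (c j) (Phi N d a j)) = 0" for S c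
    by (rule indep_core[of d N a S c]) (use assms that in auto)
  have inj: "inj_on (Phi N d a) ?A"
  proof (rule inj_onI, rule ccontr)
    fix j1 j2 assume j: "j1 \<in> ?A" "j2 \<in> ?A" "Phi N d a j1 = Phi N d a j2" "j1 \<noteq> j2"
    define c where "c j = (if j = j1 then 1 else - 1 :: complex)" for j
    have "(\<Sum>j\<in>{j1,j2}. cscale (c j) (Phi N d a j)) = 0"
      using j by (simp add: c_def fun_eq_iff)
    from core[OF _ this] j show False by (simp add: c_def)
  qed
  have cardA: "card ?A = (N + d - 1) choose N"
    using card_length_sum_list[of d N] by (simp add: adm_idx_def)
  have cardB: "card ?B = card ?A" by (rule card_image[OF inj])
  have fB: "finite ?B" using finite_adm by simp
  have indep: "\<not> V.dependent ?B"
  proof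
    assume "V.dependent ?B"
    then obtain u where u: "\<exists>v\<in>?B. u v \<noteq> 0" "(\<Sum>v\<in>?B. cscale (u v) v) = 0"
      using V.dependent_finite[OF fB] by blast
    have "(\<Sum>j\<in>?A. cscale (u (Phi N d a j)) (Phi N d a j)) = 0"
      using u(2) by (simp add: sum.reindex[OF inj])
    from core[OF order_refl this] u(1) show False by auto
  qed
  have BS: "?B \<subseteq> sym_subspace N d" using Phi_sym by blast
  have span: "V.span ?B = sym_subspace N d"
  proof
    show "V.span ?B \<subseteq> sym_subspace N d" by (rule V.span_minimal[OF BS subspace_sym])
  next
    show "sym_subspace N d \<subseteq> V.span ?B"
    proof
      fix x assume x: "x \<in> sym_subspace N d"
      show "x \<in> V.span ?B"
      proof (rule ccontr)
        assume nx: "x \<notin> V.span ?B"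
        have i2: "V.independent (insert x ?B)" by (rule V.independent_insertI[OF nx indep])
        have "insert x ?B \<subseteq> V.span (Ec N d ` ?A)" using x BS sym_in_span by blast
        hence "card (insert x ?B) \<le> card (Ec N d ` ?A)"
          using V.independent_span_bound[OF _ i2] finite_adm by blast
        also have "\<dots> \<le> card ?A" using finite_adm by (rule card_image_le)
        finally have "card (insert x ?B) \<le> card ?B" using cardB by simp
        moreover have "x \<notin> ?B" using nx V.span_base by blast
        ultimately show False using fB by simp
      qed
    qed
  qed
  show ?thesis using inj cardA cardB indep span by simp
qed

end
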